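(* Let $m>2$ and $k$ be positive integers. Then $\mathrm{msum}(mk-1,k)\ge k/2$.
   Context: For positive integers $n>k$, let $S_n$ be the set of permutations $\pi=(\pi_1,\dots,\pi_n)$ of $1,\dots,n$, with cyclic indexing $\pi_{n+i}=\pi_i$, and $s_i=\sum_{j=0}^{k-1}\pi_{i+j}$ for $i=1,\dots,n$. Define $\mathrm{msum}(\pi,k)=\max_{1\le i\le n}s_i-\frac{k(n+1)}{2}$ and $\mathrm{msum}(n,k)=\min_{\pi\in S_n}\mathrm{msum}(\pi,k)$. *)

theory Defs
  imports Complex_Main
begin

text \<open>Permutations of 1..n represented as lists (pi_1,...,pi_n) = (p!0,...,p!(n-1)).\<close>
definition perms :: "nat \<Rightarrow> nat list set" where
  "perms n = {p. distinct p \<and> set p = {1..n}}"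

definition wsum :: "nat list \<Rightarrow> nat \<Rightarrow> nat \<Rightarrow> nat" where
  "wsum p k i = (\<Sum>j<k. p ! ((i + j) mod length p))"

definition msum_perm :: "nat list \<Rightarrow> nat \<Rightarrow> real" where
  "msum_perm p k = real (Max {wsum p k i | i. i < length p})
      - real k * (real (length p) + 1) / 2"

definition msum :: "nat \<Rightarrow> nat \<Rightarrow> real" where
  "msum n k = Min ((\<lambda>p. msum_perm p k) ` perms n)"

end

theory Submission
  imports Defs
begin

lemma key_bound:
  fixes m k n :: nat and p :: "nat list"
  assumes n: "n = m * k - 1" and m: "m > 2" and k: "k > 0"
    and p: "p \<in> perms n"
  shows "2 * Max {wsum p k i | i. i < length p} \<ge> k * (m * k + 1)"
proof -
  have dp: "distinct p" and sp: "set p = {1..n}" using p by (auto simp: perms_def)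
  have len: "length p = n" using distinct_card[OF dp] sp by simp
  have "m * k \<ge> 3 * 1" using m k by (intro mult_le_mono) auto
  hence n2: "n \<ge> 2" using n by simp
  have "n \<in> set p" using sp n2 by auto
  then obtain i0 where i0: "i0 < n" "p ! i0 = n" by (metis in_set_conv_nth len)
  define S where "S = {wsum p k i | i. i < length p}"
  define M where "M = Max S"
  have finS: "finite S" unfolding S_def by simp
  have wmod: "wsum p k i = wsum p k (i mod n)" for i
    unfolding wsum_def len by (simp add: mod_add_left_eq)
  have inS: "wsum p k i \<le> M" for i
  proof -
    have "i mod n < length p" using len n2 by simp
    hence "wsum p k (i mod n) \<in> S" unfolding S_def by blast
    then show ?thesis using wmod[of i] finS M_def by simp
  qed
  define f where "f r = p ! ((i0 + r) mod n)" for r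
  have "(\<Sum>t<m. wsum p k (i0 + t * k)) = (\<Sum>t<m. sum f {t*k..<t*k+k})"
  proof (rule sum.cong[OF refl])
    fix t
    have "sum f {t*k..<t*k+k} = (\<Sum>j<k. f (t*k + j))"
        using sum.shift_bounds_nat_ivl[of f 0 "t*k" k] by (simp add: atLeast0LessThan add.commute)
    then show "wsum p k (i0 + t * k) = sum f {t*k..<t*k+k}"
      unfolding wsum_def f_def len by (simp add: add.assoc)
  qed
  also have "\<dots> = sum f {..<m*k}" by (rule sum.nat_group)
  also have "m * k = Suc n" using n n2 by simp
  also have "sum f {..<Suc n} = sum f {..<n} + f n" by simp
  also have "f n = n" unfolding f_def using i0 by simp
  also have "sum f {..<n} = sum_list (rotate i0 p)"
    unfolding sum_list_sum_nth f_def using len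
    by (simp add: nth_rotate atLeast0LessThan)
  also have "\<dots> = sum id (set p)"
    using dp sum_list_distinct_conv_sum_set[of "rotate i0 p" id] by simp
  also have "\<dots> = \<Sum>{1..n}" using sp by simp
  finally have eq: "(\<Sum>t<m. wsum p k (i0 + t * k)) = \<Sum>{1..n} + n" .
  have "(\<Sum>t<m. wsum p k (i0 + t * k)) \<le> (\<Sum>t<m. M)"
    by (rule sum_mono) (rule inS)
  hence "\<Sum>{1..n} + n \<le> m * M" using eq by simp
  hence A: "n * Suc n + 2 * n \<le> 2 * m * M"
  proof -
    have g: "2 * \<Sum>{1..n} = n * Suc n"
      using double_gauss_sum_from_Suc_0[of n, where 'a=nat] by simp
    from \<open>\<Sum>{1..n} + n \<le> m * M\<close> have "2 * \<Sum>{1..n} + 2 * n \<le> 2 * m * M" by simp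
    then show ?thesis using g by simp
  qed
  define N where "N = m * k"
  have N: "n = N - 1" "N \<ge> 3" using n n2 N_def by auto
  show ?thesis unfolding S_def[symmetric] M_def[symmetric]
  proof (rule ccontr)
    assume "\<not> k * (m * k + 1) \<le> 2 * M"
    hence "2 * M + 1 \<le> k * (N + 1)" unfolding N_def by simp
    hence "m * (2 * M + 1) \<le> m * (k * (N + 1))" by (rule mult_le_mono2)
    hence "2 * m * M + m \<le> N * (N + 1)" unfolding N_def by (simp add: algebra_simps)
    moreover have "n * Suc n + 2 * n + 2 = N * (N + 1)"
      using N by (cases N) (auto simp: algebra_simps)
    ultimately show False using A m by linarith
  qed
qed

theorem lemma4p1:
  fixes m k :: nat
  assumes "m > 2" and "k > 0"
  shows "msum (m * k - 1) k \<ge> real k / 2"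
proof -
  define n where "n = m * k - 1"
  have fin: "finite (perms n)"
  proof (rule finite_subset)
    show "perms n \<subseteq> {xs. set xs \<subseteq> {1..n} \<and> length xs \<le> n}"
      unfolding perms_def using distinct_card by fastforce
  qed (rule finite_lists_length_le, simp)
  have ne: "[1..<n+1] \<in> perms n" unfolding perms_def by auto
  have "real k / 2 \<le> msum_perm p k" if p: "p \<in> perms n" for p
  proof -
    have len: "length p = n" using p distinct_card unfolding perms_def by fastforce
    have B: "2 * Max {wsum p k i | i. i < length p} \<ge> k * (m * k + 1)"
      using key_bound[OF n_def assms p] .
    have "m * k \<ge> 1 * 1" using assms by (intro mult_le_mono) auto
    hence "m * k = n + 1" using n_def by simp
    hence "real (k * (n + 2)) \<le> 2 * real (Max {wsum p k i | i. i < length p})"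
    proof -
      have "k * (n + 2) \<le> 2 * Max {wsum p k i | i. i < length p}" using B \<open>m * k = n + 1\<close> by simp
      hence "real (k * (n + 2)) \<le> real (2 * Max {wsum p k i | i. i < length p})"
        by (simp only: of_nat_le_iff)
      then show ?thesis by simp
    qed
    then show ?thesis unfolding msum_perm_def len by (simp add: field_simps)
  qed
  then show ?thesis unfolding msum_def n_def[symmetric]
    using fin ne by (subst Min_ge_iff) auto
qed

end
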